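(* Let $f\colon\mathbb{F}_2^n\times\mathbb{F}_2^d\to\mathbb{F}_2^r$ be a strong, linear, lossless condenser for min-entropy $m$ with error $\epsilon$, and for each seed $u$ let $H_u$ be the $r\times n$ matrix with $f(x,u)=H_ux$ and $\mathcal{C}_u:=\{x\in\mathbb{F}_2^n:H_ux=0\}$. Let $\mathcal{Z}$ be a flat distribution on $\mathbb{F}_2^n$ with entropy $m$. Then for at least a $1-2\sqrt{\epsilon}$ fraction of the choices of $u\in\mathbb{F}_2^d$, we have $\mathcal{E}(\mathcal{C}_u,\mathcal{Z})\le\sqrt{\epsilon}$.
   Context: Statistical distance is half the $\ell_1$ distance. A flat distribution of entropy $m$ is the uniform distribution on a set of size $2^m$. $f$ is a strong lossless condenser for min-entropy $m$ with error $\epsilon$ if for every distribution $\mathcal{X}$ on $\mathbb{F}_2^n$ with min-entropy at least $m$ (all probabilities at most $2^{-m}$), $X\sim\mathcal{X}$, and independent uniform $U\in\mathbb{F}_2^d$, $(U,f(X,U))$ is within statistical distance $\epsilon$ of some distribution $(\mathcal{U}_d,\mathcal{Y})$ of min-entropy at least $d+m$; linear means $f(\cdot,u)$ is linear for each $u$. Consider the additive noise channel which, on input $x\in\mathbb{F}_2^n$, outputs $x+z$ with $z\sim\mathcal{Z}$ independent of $x$. The brute-force decoder for $\mathcal{C}_u$, given $\hat{y}$, finds a codeword $y\in\mathcal{C}_u$ and $z\in\mathrm{supp}(\mathcal{Z})$ with $\hat{y}=y+z$ and outputs $y$ (with arbitrary choice among several such $y$, and an arbitrary codeword if none exists). $\mathcal{E}(\mathcal{C}_u,\mathcal{Z})$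 denotes its error probability, which we take to be $\max_{x\in\mathcal{C}_u}\Pr_{z\sim\mathcal{Z}}[\exists x'\in\mathcal{C}_u,\exists z'\in\mathrm{supp}(\mathcal{Z})\setminus\{z\}: x+z=x'+z']$ (the probability that the decoder may fail to output the transmitted codeword). *)

theory Defs
  imports "HOL-Analysis.Analysis" "HOL-Probability.Probability" "HOL-Library.Z2"
begin

text \<open>F_2 is the type bit; F_2^n is bit^'n for a finite index type 'n.\<close>

instance bit :: finite
proof
  have "(UNIV :: bit set) = {0, 1}" by (auto intro: bit.exhaust)
  then show "finite (UNIV :: bit set)" by (metis finite.emptyI finite_insert)
qed

definition stat_dist :: "'a::finite pmf \<Rightarrow> 'a pmf \<Rightarrow> real" where
  "stat_dist P Q = (1/2) * (\<Sum>a\<in>UNIV. \<bar>pmf P a - pmf Q a\<bar>)"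

definition min_entropy_ge :: "'a pmf \<Rightarrow> real \<Rightarrow> bool" where
  "min_entropy_ge P k \<longleftrightarrow> (\<forall>a. pmf P a \<le> 2 powr (- k))"

definition strong_lossless_condenser ::
  "(bit^'n \<Rightarrow> bit^'d \<Rightarrow> bit^'r) \<Rightarrow> real \<Rightarrow> real \<Rightarrow> bool" where
  "strong_lossless_condenser f m eps \<longleftrightarrow>
     (\<forall>X :: (bit^'n) pmf. min_entropy_ge X m \<longrightarrow>
        (\<exists>W :: ((bit^'d) \<times> (bit^'r)) pmf.
            map_pmf fst W = pmf_of_set UNIV \<and>
            min_entropy_ge W (real CARD('d) + m) \<and>
            stat_dist (map_pmf (\<lambda>(x, u). (u, f x u)) (pair_pmf X (pmf_of_set UNIV))) W \<le> eps))"

definition linear_condenser :: "(bit^'n \<Rightarrow> bit^'d \<Rightarrow> bit^'r) \<Rightarrow> bool" where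
  "linear_condenser f \<longleftrightarrow> (\<forall>u. Vector_Spaces.linear (*s) (*s) (\<lambda>x. f x u))"

definition flat_dist :: "'a pmf \<Rightarrow> real \<Rightarrow> bool" where
  "flat_dist Z m \<longleftrightarrow> (\<exists>S. finite S \<and> S \<noteq> {} \<and> real (card S) = 2 powr m \<and> Z = pmf_of_set S)"

text \<open>Error probability of the brute-force decoder for code C over the additive noise channel Z.\<close>
definition decoding_error :: "(bit^'n) set \<Rightarrow> (bit^'n) pmf \<Rightarrow> real" where
  "decoding_error C Z = Max ((\<lambda>x. measure_pmf.prob Z
       {z. \<exists>x'\<in>C. \<exists>z'\<in>set_pmf Z - {z}. x + z = x' + z'}) ` C)"

end

theory Submission
  imports Defs
begin

lemma bit_add_self: "(b::bit) + b = 0"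
  by (cases b) auto

lemma bitvec_add_self: "(v::bit^'k) + v = 0"
  by (simp add: vec_eq_iff bit_add_self)

lemma card_bit: "CARD(bit) = 2"
proof -
  have "(UNIV :: bit set) = {0, 1}" by (auto intro: bit.exhaust)
  then have "card (UNIV::bit set) = card {0::bit,1}" by simp
  also have "\<dots> = 2" by simp
  finally show ?thesis .
qed

lemma bad_iff:
  fixes A :: "bit^'n^'r" and S :: "(bit^'n) set"
  assumes x: "A *v x = 0"
  shows "(\<exists>x'\<in>{x. A *v x = 0}. \<exists>z'\<in>S - {z}. x + z = x' + z') \<longleftrightarrow> (\<exists>z'\<in>S. z' \<noteq> z \<and> A *v z' = A *v z)"
proof
  assume "\<exists>x'\<in>{x. A *v x = 0}. \<exists>z'\<in>S - {z}. x + z = x' + z'"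
  then obtain x' z' where x': "A *v x' = 0" and z': "z' \<in> S" "z' \<noteq> z" and e: "x + z = x' + z'" by auto
  have "A *v (x + z) = A *v (x' + z')" using e by simp
  then have "A *v z = A *v z'" using x x' by (simp add: matrix_vector_right_distrib)
  then show "\<exists>z'\<in>S. z' \<noteq> z \<and> A *v z' = A *v z" using z' by auto
next
  assume "\<exists>z'\<in>S. z' \<noteq> z \<and> A *v z' = A *v z"
  then obtain z' where z': "z' \<in> S" "z' \<noteq> z" "A *v z' = A *v z" by auto
  have "A *v (x + z + z') = 0" using x z'(3) by (simp add: matrix_vector_right_distrib bitvec_add_self)
  moreover have "x + z = (x + z + z') + z'" by (simp add: add.assoc bitvec_add_self)
  ultimately show "\<exists>x'\<in>{x. A *v x = 0}. \<exists>z'\<in>S - {z}. x + z = x' + z'" using z' by blast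
qed

lemma stat_dist_lower:
  fixes P Q :: "'a::finite pmf"
  assumes "\<And>a. pmf Q a \<le> b"
  shows "stat_dist P Q \<ge> (\<Sum>a\<in>UNIV. max (pmf P a - b) 0)"
proof -
  have sP: "(\<Sum>a\<in>UNIV. pmf P a) = 1" by (rule sum_pmf_eq_1) auto
  have sQ: "(\<Sum>a\<in>UNIV. pmf Q a) = 1" by (rule sum_pmf_eq_1) auto
  have "(\<Sum>a\<in>UNIV. \<bar>pmf P a - pmf Q a\<bar>) = (\<Sum>a\<in>UNIV. 2 * max (pmf P a - pmf Q a) 0 - (pmf P a - pmf Q a))"
    by (rule sum.cong) (simp_all add: max_def abs_if)
  also have "\<dots> = 2 * (\<Sum>a\<in>UNIV. max (pmf P a - pmf Q a) 0) - ((\<Sum>a\<in>UNIV. pmf P a) - (\<Sum>a\<in>UNIV. pmf Q a))"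
    by (simp add: sum_subtractf sum_distrib_left)
  also have "\<dots> = 2 * (\<Sum>a\<in>UNIV. max (pmf P a - pmf Q a) 0)" using sP sQ by simp
  finally have e: "stat_dist P Q = (\<Sum>a\<in>UNIV. max (pmf P a - pmf Q a) 0)"
    unfolding stat_dist_def by simp
  have "(\<Sum>a\<in>UNIV. max (pmf P a - b) 0) \<le> (\<Sum>a\<in>UNIV. max (pmf P a - pmf Q a) 0)"
  proof (intro sum_mono)
    fix a
    have "pmf Q a \<le> b" by (rule assms)
    then show "max (pmf P a - b) 0 \<le> max (pmf P a - pmf Q a) 0" by (simp add: max_def)
  qed
  then show ?thesis using e by simp
qed

lemma stat_dist_nonneg: "stat_dist P Q \<ge> 0"
  unfolding stat_dist_def by (simp add: sum_nonneg)

lemma card_two: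
  assumes "finite A" "card A \<ge> 2" "z \<in> A"
  shows "\<exists>z'\<in>A. z' \<noteq> z"
proof (rule ccontr)
  assume "\<not> ?thesis"
  then have "A \<subseteq> {z}" by auto
  then have "card A \<le> 1" using card_mono[of "{z}" A] by simp
  then show False using assms by simp
qed

lemma fiber_bound:
  fixes g :: "'a \<Rightarrow> 'b::finite" and S :: "'a set"
  assumes fin: "finite S"
  shows "real (card {z\<in>S. \<exists>z'\<in>S. z' \<noteq> z \<and> g z' = g z}) / 2
    \<le> (\<Sum>y\<in>UNIV. max (real (card {z\<in>S. g z = y}) - 1) 0)"
proof -
  let ?bad = "{z\<in>S. \<exists>z'\<in>S. z' \<noteq> z \<and> g z' = g z}"
  have pw: "real (card {z\<in>?bad. g z = y}) / 2 \<le> max (real (card {z\<in>S. g z = y}) - 1) 0" for y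
  proof (cases "card {z\<in>S. g z = y} \<ge> 2")
    case True
    have "{z\<in>?bad. g z = y} = {z\<in>S. g z = y}"
    proof safe
      fix z assume z: "z \<in> S" "y = g z"
      then obtain z' where "z' \<in> {z\<in>S. g z = y}" "z' \<noteq> z"
        using card_two[of "{z\<in>S. g z = y}" z] True fin by auto
      then show "\<exists>z'\<in>S. z' \<noteq> z \<and> g z' = g z" using z by auto
    qed
    then have "real (card {z\<in>?bad. g z = y}) = real (card {z\<in>S. g z = y})" by simp
    moreover have "real (card {z\<in>S. g z = y}) \<ge> 2" using True by simp
    ultimately show ?thesis by (auto simp: max_def)
  next
    case False
    have "{z\<in>?bad. g z = y} = {}"
    proof (rule ccontr)
      assume "{z\<in>?bad. g z = y} \<noteq> {}"
      then obtain z z' where zz: "z \<in> S" "z' \<in> S" "z' \<noteq> z" "g z' = g z" "g z = y" by auto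
      have "{z, z'} \<subseteq> {z\<in>S. g z = y}" using zz by auto
      then have "card {z, z'} \<le> card {z\<in>S. g z = y}" by (intro card_mono) (use fin in auto)
      then show False using zz False by simp
    qed
    then have e: "card {z\<in>?bad. g z = y} = 0" by (metis card.empty)
    show ?thesis by (simp only: e)
  qed
  have "real (card ?bad) = (\<Sum>y\<in>UNIV. real (card {z\<in>?bad. g z = y}))"
  proof -
    have "(\<Sum>y\<in>UNIV. sum (\<lambda>_. 1::real) {z\<in>?bad. g z = y}) = sum (\<lambda>_. 1::real) ?bad"
      by (rule sum.group) (use fin in auto)
    then show ?thesis by simp
  qed
  then have "real (card ?bad) / 2 = (\<Sum>y\<in>UNIV. real (card {z\<in>?bad. g z = y}) / 2)"
    by (simp add: sum_divide_distrib)
  also have "\<dots> \<le> (\<Sum>y\<in>UNIV. max (real (card {z\<in>S. g z = y}) - 1) 0)"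
    by (intro sum_mono pw)
  finally show ?thesis .
qed

theorem mainTheorem17:
  fixes f :: "bit^'n \<Rightarrow> bit^'d \<Rightarrow> bit^'r"
    and H :: "bit^'d \<Rightarrow> bit^'n^'r"
    and m eps :: real
    and Z :: "(bit^'n) pmf"
  assumes cond: "strong_lossless_condenser f m eps"
    and lin: "linear_condenser f"
    and H: "\<And>x u. f x u = H u *v x"
    and flat: "flat_dist Z m"
  shows "real (card {u :: bit^'d. decoding_error {x. H u *v x = 0} Z \<le> sqrt eps})
           \<ge> (1 - 2 * sqrt eps) * real CARD(bit^'d)"
proof -
  obtain S where S: "finite S" "S \<noteq> {}" "real (card S) = 2 powr m" and Zdef: "Z = pmf_of_set S"
    using flat unfolding flat_dist_def by blast
  define K where "K = real (card S)"
  define N where "N = real CARD(bit^'d)"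
  have Kpos: "K > 0" using S unfolding K_def by (simp add: card_gt_0_iff)
  have Npos: "N > 0" unfolding N_def by simp
  have N2: "N = 2 powr real CARD('d)"
    unfolding N_def by (simp add: CARD_vec card_bit powr_realpow)
  define c where "c u y = card {z\<in>S. H u *v z = y}" for u y
  define bad where "bad u = {z\<in>S. \<exists>z'\<in>S. z' \<noteq> z \<and> H u *v z' = H u *v z}" for u
  define B where "B u = real (card (bad u)) / K" for u
  have setZ: "set_pmf Z = S" using S by (simp add: Zdef)
  have dec: "decoding_error {x. H u *v x = 0} Z = B u" for u
  proof -
    let ?C = "{x. H u *v x = 0}"
    have g: "measure_pmf.prob Z {z. \<exists>x'\<in>?C. \<exists>z'\<in>set_pmf Z - {z}. x + z = x' + z'} = B u"
      if x: "x \<in> ?C" for x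
    proof -
      have "S \<inter> {z. \<exists>x'\<in>?C. \<exists>z'\<in>set_pmf Z - {z}. x + z = x' + z'} = bad u"
        using bad_iff[of "H u" x S] x unfolding bad_def setZ by auto
      then show ?thesis using S unfolding Zdef B_def K_def
        by (simp add: measure_pmf_of_set)
    qed
    have "0 \<in> ?C" by simp
    then have "(\<lambda>x. measure_pmf.prob Z {z. \<exists>x'\<in>?C. \<exists>z'\<in>set_pmf Z - {z}. x + z = x' + z'}) ` ?C = {B u}"
    proof -
      have "(\<lambda>x. measure_pmf.prob Z {z. \<exists>x'\<in>?C. \<exists>z'\<in>set_pmf Z - {z}. x + z = x' + z'}) ` ?C = (\<lambda>x. B u) ` ?C"
        by (rule image_cong[OF refl]) (erule g)
      also have "\<dots> = {B u}" using \<open>0 \<in> ?C\<close> by blast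
      finally show ?thesis .
    qed
    then show ?thesis unfolding decoding_error_def by simp
  qed
  have "min_entropy_ge Z m"
    unfolding min_entropy_ge_def
  proof
    fix a
    have "pmf Z a \<le> 1 / K" using S unfolding Zdef K_def by (simp add: pmf_of_set indicator_def)
    also have "\<dots> = 2 powr (- m)" using S unfolding K_def by (simp add: powr_minus divide_inverse)
    finally show "pmf Z a \<le> 2 powr (- m)" .
  qed
  then obtain W :: "((bit^'d) \<times> (bit^'r)) pmf" where
    Wme: "min_entropy_ge W (real CARD('d) + m)" and
    Wsd: "stat_dist (map_pmf (\<lambda>(x, u). (u, f x u)) (pair_pmf Z (pmf_of_set UNIV))) W \<le> eps"
    using cond unfolding strong_lossless_condenser_def by blast
  define D where "D = map_pmf (\<lambda>(x, u). (u, f x u)) (pair_pmf Z (pmf_of_set (UNIV :: (bit^'d) set)))"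
  have eps0: "eps \<ge> 0" using Wsd stat_dist_nonneg[of D W] unfolding D_def by simp
  have beta: "2 powr (- (real CARD('d) + m)) = 1 / (K * N)"
  proof -
    have "2 powr (- (real CARD('d) + m)) = inverse (2 powr (real CARD('d) + m))"
      by (rule powr_minus)
    also have "\<dots> = inverse (2 powr real CARD('d) * 2 powr m)" by (simp only: powr_add)
    finally show ?thesis using S unfolding K_def N2 by (simp add: divide_inverse mult.commute)
  qed
  have Wb: "pmf W a \<le> 1 / (K * N)" for a
    using Wme beta unfolding min_entropy_ge_def by metis
  have pD: "pmf D (u, y) = real (c u y) / (K * N)" for u y
  proof -
    have pre: "(\<lambda>(x, u). (u, f x u)) -` {(u, y)} = {x. H u *v x = y} \<times> {u}"
      by (auto simp: H)
    have "pmf D (u, y) = measure_pmf.prob Z {x. H u *v x = y} * measure_pmf.prob (pmf_of_set UNIV) {u}"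
      unfolding D_def pmf_map pre by (rule measure_pmf_prob_product) auto
    also have "measure_pmf.prob Z {x. H u *v x = y} = real (c u y) / K"
    proof -
      have "S \<inter> {x. H u *v x = y} = {z\<in>S. H u *v z = y}" by auto
      then show ?thesis using S unfolding Zdef c_def K_def by (simp add: measure_pmf_of_set)
    qed
    also have "measure_pmf.prob (pmf_of_set UNIV) {u} = 1 / N"
      unfolding N_def by (simp add: measure_pmf_of_set)
    finally show ?thesis by simp
  qed
  have "eps \<ge> (\<Sum>a\<in>UNIV. max (pmf D a - 1 / (K * N)) 0)"
    using stat_dist_lower[of W "1 / (K * N)" D, OF Wb] Wsd unfolding D_def by linarith
  also have "(\<Sum>a\<in>UNIV. max (pmf D a - 1 / (K * N)) 0)
      = (\<Sum>u\<in>UNIV. \<Sum>y\<in>UNIV. max (pmf D (u, y) - 1 / (K * N)) 0)"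
    by (simp add: sum.cartesian_product)
  also have "\<dots> = (\<Sum>u\<in>UNIV. (\<Sum>y\<in>UNIV. max (real (c u y) - 1) 0) / (K * N))"
  proof (intro sum.cong refl)
    fix u
    have "max (real (c u y) / (K * N) - 1 / (K * N)) 0 = max (real (c u y) - 1) 0 / (K * N)" for y
      using Kpos Npos by (auto simp: max_def field_simps)
    then show "(\<Sum>y\<in>UNIV. max (pmf D (u, y) - 1 / (K * N)) 0) = (\<Sum>y\<in>UNIV. max (real (c u y) - 1) 0) / (K * N)"
      by (simp add: pD sum_divide_distrib)
  qed
  finally have e1: "(\<Sum>u\<in>UNIV. (\<Sum>y\<in>UNIV. max (real (c u y) - 1) 0) / (K * N)) \<le> eps" .
  have "(\<Sum>u\<in>UNIV. B u / (2 * N)) \<le> (\<Sum>u\<in>UNIV. (\<Sum>y\<in>UNIV. max (real (c u y) - 1) 0) / (K * N))"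
  proof (intro sum_mono)
    fix u
    have "real (card (bad u)) / 2 \<le> (\<Sum>y\<in>UNIV. max (real (c u y) - 1) 0)"
      using fiber_bound[OF S(1), of "\<lambda>z. H u *v z"] unfolding bad_def c_def by simp
    then have "real (card (bad u)) / 2 / (K * N) \<le> (\<Sum>y\<in>UNIV. max (real (c u y) - 1) 0) / (K * N)"
      using Kpos Npos by (intro divide_right_mono) auto
    then show "B u / (2 * N) \<le> (\<Sum>y\<in>UNIV. max (real (c u y) - 1) 0) / (K * N)"
      unfolding B_def by (simp add: field_simps)
  qed
  then have "(\<Sum>u\<in>UNIV. B u) / (2 * N) \<le> eps" using e1 by (simp add: sum_divide_distrib)
  then have sumB: "(\<Sum>u\<in>UNIV. B u) \<le> 2 * N * eps" using Npos by (simp add: field_simps)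
  have Bnn: "B u \<ge> 0" for u unfolding B_def using Kpos by simp
  define G where "G = {u :: bit^'d. B u \<le> sqrt eps}"
  have GG: "{u :: bit^'d. decoding_error {x. H u *v x = 0} Z \<le> sqrt eps} = G"
    unfolding G_def dec ..
  have cardsum: "real (card G) + real (card (- G)) = N"
    unfolding N_def using card_Un_disjoint[of G "- G"] by (simp flip: of_nat_add)
  show ?thesis
  proof (cases "eps = 0")
    case True
    have "(\<Sum>u\<in>UNIV. B u) \<ge> 0" using Bnn by (simp add: sum_nonneg)
    then have "(\<Sum>u\<in>UNIV. B u) = 0" using sumB True by simp
    then have "\<forall>u\<in>UNIV. B u = 0" using Bnn by (subst (asm) sum_nonneg_eq_0_iff) auto
    then have "G = UNIV" unfolding G_def using True by auto
    then show ?thesis unfolding GG using True N_def by simp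
  next
    case False
    define s where "s = sqrt eps"
    have spos: "s > 0" using False eps0 unfolding s_def by simp
    have ss: "s * s = eps" using eps0 unfolding s_def by simp
    have "real (card (- G)) * s = (\<Sum>u\<in>- G. s)" by simp
    also have "\<dots> \<le> (\<Sum>u\<in>- G. B u)" by (intro sum_mono) (auto simp: G_def s_def)
    also have "\<dots> \<le> (\<Sum>u\<in>UNIV. B u)" by (intro sum_mono2) (auto simp: Bnn)
    also have "\<dots> \<le> 2 * N * (s * s)" using sumB ss by simp
    finally have "real (card (- G)) \<le> 2 * N * s" using spos
      by (metis mult.assoc mult.commute mult_le_cancel_right_pos)
    then have "real (card G) \<ge> (1 - 2 * s) * N" using cardsum by (simp add: algebra_simps)
    then show ?thesis unfolding GG s_def N_def .
  qed
qed

end
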